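(* Let $G$ be a connected chordal graph. Suppose $G$ contains two induced diamonds $D_1$ and $D_2$, where $D_j$ has tips $t_j,t_j'$, set of tips $T_j$, centers $c_j,c_j'$ and set of centers $C_j=\{c_j,c_j'\}$, such that: (i) $C_1\cap C_2=\emptyset$; (ii) if no vertex of $C_1$ is adjacent to a vertex of $C_2$, then every minimal $C_1,C_2$-separator in $G$ has size one; (iii) for each $j\in\{1,2\}$, the tips $t_j$ and $t_j'$ belong to different connected components of $G-C_j$; (iv) for each $j\in\{1,2\}$, every connected component of $G-C_j$ contains a vertex adjacent to both vertices of $C_j$. Then $G$ has an induced subgraph isomorphic to $F_1$, $F_2$, or $H_i$ for some $i\ge 1$.
   Context: A graph is chordal if it has no induced cycle of length at least $4$. A diamond is the graph obtained from $K_4$ by deleting one edge; its two vertices of degree $2$ are its tips and its two vertices of degree $3$ are its centers. For disjoint vertex sets $A,B$ with no edge between $A$ and $B$, an $A,B$-separator is a set $S\subseteq V(G)\setminus(A\cup B)$ such that $A$ and $B$ lie in different components of $G-S$ (here meaning no component of $G-S$ meets both $A$ and $B$); it is minimal if it contains no other $A,B$-separator. $F_1$ is the square of the $6$-vertex path: vertices $p_1,\dots,p_6$ with $p_ip_j$ an edge iff $1\le|i-j|\le 2$. $F_2$ is obtained from $K_4$ on $\{a,b,c,d\}$ by adding a vertex adjacent exactly to $a,b$ and a vertex adjacent exactly to $c,d$. For $i\ge 1$, $H_i$ has vertex set $\{x_1,x_2,x_3,y_1,\dots,y_i,z_1,z_2,z_3\}$ and edges: the path $y_1y_2\cdots y_i$;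 $x_1x_2,x_1x_3,x_2x_3,x_2y_1,x_3y_1$ (a diamond with tips $x_1,y_1$); and $z_1z_2,z_1z_3,z_2z_3,z_2y_i,z_3y_i$ (a diamond with tips $z_1,y_i$); no other edges. (So $H_1$ is two diamonds sharing a tip.) *)

theory Defs
  imports Main
begin

definition simple_graph :: "'a set \<Rightarrow> ('a \<Rightarrow> 'a \<Rightarrow> bool) \<Rightarrow> bool" where
  "simple_graph V E \<longleftrightarrow> finite V \<and> (\<forall>u v. E u v \<longrightarrow> E v u)
     \<and> (\<forall>v. \<not> E v v) \<and> (\<forall>u v. E u v \<longrightarrow> u \<in> V \<and> v \<in> V)"

definition reach_in :: "('a \<Rightarrow> 'a \<Rightarrow> bool) \<Rightarrow> 'a set \<Rightarrow> 'a \<Rightarrow> 'a \<Rightarrow> bool" where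
  "reach_in E S u v \<longleftrightarrow> u \<in> S \<and> v \<in> S \<and> (\<lambda>x y. x \<in> S \<and> y \<in> S \<and> E x y)\<^sup>*\<^sup>* u v"

definition connected_graph :: "'a set \<Rightarrow> ('a \<Rightarrow> 'a \<Rightarrow> bool) \<Rightarrow> bool" where
  "connected_graph V E \<longleftrightarrow> V \<noteq> {} \<and> (\<forall>u\<in>V. \<forall>v\<in>V. reach_in E V u v)"

definition induced_cycle :: "'a set \<Rightarrow> ('a \<Rightarrow> 'a \<Rightarrow> bool) \<Rightarrow> 'a list \<Rightarrow> bool" where
  "induced_cycle V E vs \<longleftrightarrow> distinct vs \<and> set vs \<subseteq> V \<and> length vs \<ge> 3 \<and>
     (\<forall>i<length vs. \<forall>j<length vs.
        E (vs ! i) (vs ! j) \<longleftrightarrow> (j = Suc i mod length vs \<or> i = Suc j mod length vs))"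

definition chordal :: "'a set \<Rightarrow> ('a \<Rightarrow> 'a \<Rightarrow> bool) \<Rightarrow> bool" where
  "chordal V E \<longleftrightarrow> (\<nexists>vs. induced_cycle V E vs \<and> length vs \<ge> 4)"

definition induced_diamond :: "'a set \<Rightarrow> ('a \<Rightarrow> 'a \<Rightarrow> bool) \<Rightarrow> 'a \<Rightarrow> 'a \<Rightarrow> 'a \<Rightarrow> 'a \<Rightarrow> bool" where
  "induced_diamond V E t t' c c' \<longleftrightarrow> {t, t', c, c'} \<subseteq> V \<and> distinct [t, t', c, c'] \<and>
     E c c' \<and> E t c \<and> E t c' \<and> E t' c \<and> E t' c' \<and> \<not> E t t'"

definition separator :: "'a set \<Rightarrow> ('a \<Rightarrow> 'a \<Rightarrow> bool) \<Rightarrow> 'a set \<Rightarrow> 'a set \<Rightarrow> 'a set \<Rightarrow> bool" where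
  "separator V E A B S \<longleftrightarrow> S \<subseteq> V - (A \<union> B) \<and>
     (\<forall>a\<in>A. \<forall>b\<in>B. \<not> reach_in E (V - S) a b)"

definition minimal_separator :: "'a set \<Rightarrow> ('a \<Rightarrow> 'a \<Rightarrow> bool) \<Rightarrow> 'a set \<Rightarrow> 'a set \<Rightarrow> 'a set \<Rightarrow> bool" where
  "minimal_separator V E A B S \<longleftrightarrow> separator V E A B S \<and>
     (\<forall>S'. S' \<subset> S \<longrightarrow> \<not> separator V E A B S')"

definition has_induced :: "'a set \<Rightarrow> ('a \<Rightarrow> 'a \<Rightarrow> bool) \<Rightarrow> 'b set \<Rightarrow> ('b \<Rightarrow> 'b \<Rightarrow> bool) \<Rightarrow> bool" where
  "has_induced V E VH EH \<longleftrightarrow> (\<exists>f. inj_on f VH \<and> f ` VH \<subseteq> V \<and>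
     (\<forall>u\<in>VH. \<forall>v\<in>VH. E (f u) (f v) \<longleftrightarrow> EH u v))"

text \<open>F1: square of the path p1..p6 (vertices 1..6).\<close>
definition F1_V :: "nat set" where "F1_V = {1..6}"
definition F1_E :: "nat \<Rightarrow> nat \<Rightarrow> bool" where
  "F1_E i j \<longleftrightarrow> i \<in> F1_V \<and> j \<in> F1_V \<and> i \<noteq> j \<and> (i \<le> j + 2 \<and> j \<le> i + 2)"

text \<open>F2: K4 on a=0,b=1,c=2,d=3, plus 4 adjacent to 0,1 and 5 adjacent to 2,3.\<close>
definition F2_V :: "nat set" where "F2_V = {0..5}"
definition F2_E0 :: "nat \<Rightarrow> nat \<Rightarrow> bool" where
  "F2_E0 u v \<longleftrightarrow> (u < 4 \<and> v < 4 \<and> u \<noteq> v) \<or> (u = 4 \<and> v \<in> {0,1}) \<or> (u = 5 \<and> v \<in> {2,3})"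
definition F2_E :: "nat \<Rightarrow> nat \<Rightarrow> bool" where
  "F2_E u v \<longleftrightarrow> F2_E0 u v \<or> F2_E0 v u"

text \<open>H_i: x1,x2,x3 = 0,1,2; z1,z2,z3 = 3,4,5; y_k = 5 + k for k = 1..i.\<close>
definition H_V :: "nat \<Rightarrow> nat set" where "H_V i = {0..5 + i}"
definition H_E0 :: "nat \<Rightarrow> nat \<Rightarrow> nat \<Rightarrow> bool" where
  "H_E0 i u v \<longleftrightarrow>
     (6 \<le> u \<and> v = u + 1 \<and> v \<le> 5 + i) \<comment> \<open>path y_1 ... y_i\<close>
     \<or> (u, v) \<in> {(0,1), (0,2), (1,2), (1,6), (2,6)} \<comment> \<open>diamond with tips x1, y1\<close>
     \<or> (u, v) \<in> {(3,4), (3,5), (4,5), (4,5+i), (5,5+i)} \<comment> \<open>diamond with tips z1, y_i\<close>"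
definition H_E :: "nat \<Rightarrow> nat \<Rightarrow> nat \<Rightarrow> bool" where
  "H_E i u v \<longleftrightarrow> H_E0 i u v \<or> H_E0 i v u"

end

theory Submission
  imports Defs
begin

definition walk :: "('a \<Rightarrow> 'a \<Rightarrow> bool) \<Rightarrow> (nat \<Rightarrow> 'a) \<Rightarrow> nat \<Rightarrow> bool" where
  "walk E f n \<longleftrightarrow> (\<forall>i<n. E (f i) (f (Suc i)))"

definition gdist :: "('a \<Rightarrow> 'a \<Rightarrow> bool) \<Rightarrow> 'a \<Rightarrow> 'a \<Rightarrow> nat" where
  "gdist E u v = (LEAST n. \<exists>f. walk E f n \<and> f 0 = u \<and> f n = v)"

lemma walk_append:
  assumes "walk E f m" "walk E g n" "f m = g 0"
  shows "walk E (\<lambda>i. if i \<le> m then f i else g (i - m)) (m + n)"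
  unfolding walk_def
proof (intro allI impI)
  fix i assume i: "i < m + n"
  show "E (if i \<le> m then f i else g (i - m)) (if Suc i \<le> m then f (Suc i) else g (Suc i - m))"
  proof (cases "Suc i \<le> m")
    case True thus ?thesis using assms(1) i unfolding walk_def by auto
  next
    case False
    show ?thesis
    proof (cases "i = m")
      case True
      thus ?thesis using assms(2,3) i unfolding walk_def by auto
    next
      case False
      hence "i > m" using \<open>\<not> Suc i \<le> m\<close> by auto
      hence "Suc i - m = Suc (i - m)" by auto
      thus ?thesis using assms(2) i \<open>i > m\<close> unfolding walk_def by auto
    qed
  qed
qed

lemma walk_shift:
  assumes "walk E f n" "k \<le> n"
  shows "walk E (\<lambda>i. f (k + i)) (n - k)"
  using assms unfolding walk_def by auto

lemma walk_take:
  assumes "walk E f n" "k \<le> n"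
  shows "walk E f k"
  using assms unfolding walk_def by auto

lemma walk_cong:
  assumes "walk E f n" "\<forall>i\<le>n. g i = f i"
  shows "walk E g n"
  using assms unfolding walk_def by auto

locale sg =
  fixes V :: "'a set" and E :: "'a \<Rightarrow> 'a \<Rightarrow> bool"
  assumes graph: "simple_graph V E"
    and conn: "connected_graph V E"
begin

abbreviation d where "d \<equiv> gdist E"

lemma E_sym: "E u v \<Longrightarrow> E v u" using graph unfolding simple_graph_def by blast
lemma E_irr: "\<not> E u u" using graph unfolding simple_graph_def by blast
lemma E_V: "E u v \<Longrightarrow> u \<in> V \<and> v \<in> V" using graph unfolding simple_graph_def by blast
lemma E_ne: "E u v \<Longrightarrow> u \<noteq> v" using E_irr by auto
lemma finV: "finite V" using graph unfolding simple_graph_def by blast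

lemma walk_rev:
  assumes "walk E f n"
  shows "walk E (\<lambda>i. f (n - i)) n"
  unfolding walk_def
proof (intro allI impI)
  fix i assume i: "i < n"
  have "E (f (n - Suc i)) (f (Suc (n - Suc i)))" using assms i unfolding walk_def by auto
  moreover have "Suc (n - Suc i) = n - i" using i by auto
  ultimately show "E (f (n - i)) (f (n - Suc i))" using E_sym by auto
qed

lemma walk_V: "walk E f n \<Longrightarrow> 0 < n \<Longrightarrow> i \<le> n \<Longrightarrow> f i \<in> V"
  unfolding walk_def
proof -
  assume w: "\<forall>i<n. E (f i) (f (Suc i))" and n: "0 < n" and i: "i \<le> n"
  show "f i \<in> V"
  proof (cases "i < n")
    case True thus ?thesis using w E_V by blast
  next
    case False
    hence "i = Suc (n - 1)" using i n by auto
    thus ?thesis using w E_V n by (metis diff_less zero_less_one)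
  qed
qed

lemma reach_walk:
  assumes "reach_in E S u v"
  shows "\<exists>f n. walk E f n \<and> f 0 = u \<and> f n = v \<and> (\<forall>i\<le>n. f i \<in> S)"
proof -
  have r: "(\<lambda>x y. x \<in> S \<and> y \<in> S \<and> E x y)\<^sup>*\<^sup>* u v" and uS: "u \<in> S"
    using assms unfolding reach_in_def by auto
  from r show ?thesis
  proof (induction rule: rtranclp_induct)
    case base
    show ?case using uS by (intro exI[of _ "\<lambda>_. u"] exI[of _ 0]) (auto simp: walk_def)
  next
    case (step y z)
    then obtain f n where f: "walk E f n" "f 0 = u" "f n = y" "\<forall>i\<le>n. f i \<in> S" by blast
    let ?g = "\<lambda>i. if i \<le> n then f i else z"
    have "walk E ?g (Suc n)" using f step(2) unfolding walk_def
      by (auto simp: less_Suc_eq)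
    moreover have "\<forall>i\<le>Suc n. ?g i \<in> S" using f step(2) by auto
    ultimately show ?case using f by (intro exI[of _ ?g] exI[of _ "Suc n"]) auto
  qed
qed

lemma walk_reach:
  assumes "walk E f n" "\<forall>i\<le>n. f i \<in> S"
  shows "reach_in E S (f 0) (f n)"
proof -
  have "(\<lambda>x y. x \<in> S \<and> y \<in> S \<and> E x y)\<^sup>*\<^sup>* (f 0) (f k)" if "k \<le> n" for k
    using that
  proof (induction k)
    case 0 then show ?case by auto
  next
    case (Suc k)
    have "E (f k) (f (Suc k))" using assms(1) Suc(2) unfolding walk_def by auto
    moreover have "f k \<in> S" "f (Suc k) \<in> S" using assms(2) Suc(2) by auto
    moreover have "(\<lambda>x y. x \<in> S \<and> y \<in> S \<and> E x y)\<^sup>*\<^sup>* (f 0) (f k)"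
      using Suc.IH Suc.prems by simp
    ultimately show ?case by (simp add: rtranclp.rtrancl_into_rtrancl)
  qed
  thus ?thesis using assms(2) unfolding reach_in_def by auto
qed

lemma conn_walk:
  assumes "u \<in> V" "v \<in> V"
  shows "\<exists>f n. walk E f n \<and> f 0 = u \<and> f n = v"
  using conn assms reach_walk unfolding connected_graph_def by blast

lemma dist_ex:
  assumes "u \<in> V" "v \<in> V"
  shows "\<exists>f. walk E f (d u v) \<and> f 0 = u \<and> f (d u v) = v"
proof -
  obtain f n where "walk E f n \<and> f 0 = u \<and> f n = v" using conn_walk assms by blast
  hence "\<exists>n f. walk E f n \<and> f 0 = u \<and> f n = v" by blast
  thus ?thesis unfolding gdist_def by (rule LeastI_ex)
qed

lemma dist_le:
  assumes "walk E f n"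
  shows "d (f 0) (f n) \<le> n"
  unfolding gdist_def using assms by (intro Least_le) blast

lemma dist_self: "d u u = 0"
proof -
  have "walk E (\<lambda>_. u) 0" by (simp add: walk_def)
  from dist_le[OF this] show ?thesis by simp
qed

lemma dist_0:
  assumes "u \<in> V" "v \<in> V" "d u v = 0" shows "u = v"
  using dist_ex[OF assms(1,2)] assms(3) by auto

lemma dist_sym:
  assumes "u \<in> V" "v \<in> V"
  shows "d u v = d v u"
proof -
  have le: "d y x \<le> d x y" if xV: "x \<in> V" and yV: "y \<in> V" for x y
  proof -
    obtain f where f: "walk E f (d x y)" "f 0 = x" "f (d x y) = y" using dist_ex[OF xV yV] by blast
    from dist_le[OF walk_rev[OF f(1)]] show ?thesis using f by simp
  qed
  show ?thesis using le[OF assms] le[OF assms(2,1)] by auto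
qed

lemma dist_tri:
  assumes "u \<in> V" "v \<in> V" "w \<in> V"
  shows "d u w \<le> d u v + d v w"
proof -
  obtain f where f: "walk E f (d u v)" "f 0 = u" "f (d u v) = v" using dist_ex assms by blast
  obtain g where g: "walk E g (d v w)" "g 0 = v" "g (d v w) = w" using dist_ex assms by blast
  have "walk E (\<lambda>i. if i \<le> d u v then f i else g (i - d u v)) (d u v + d v w)"
    using walk_append[OF f(1) g(1)] f g by auto
  from dist_le[OF this] show ?thesis using f g by (cases "d v w = 0") auto
qed

lemma dist_edge:
  assumes "E u v" shows "d u v = 1"
proof -
  have "walk E (\<lambda>i. if i = 0 then u else v) 1" using assms by (simp add: walk_def)
  from dist_le[OF this] have "d u v \<le> 1" by simp
  moreover have "d u v \<noteq> 0" using dist_0 E_V[OF assms] E_ne[OF assms] by blast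
  ultimately show ?thesis by simp
qed

lemma dist_step:
  assumes "E u v" "w \<in> V"
  shows "d u w \<le> Suc (d v w)" "d v w \<le> Suc (d u w)"
proof -
  have uv: "u \<in> V" "v \<in> V" using E_V assms by auto
  show "d u w \<le> Suc (d v w)" using dist_tri[OF uv(1) uv(2) assms(2)] dist_edge[OF assms(1)] by simp
  show "d v w \<le> Suc (d u w)" using dist_tri[OF uv(2) uv(1) assms(2)] dist_edge[OF E_sym[OF assms(1)]] by simp
qed

lemma dist_step2:
  assumes "E u v" "w \<in> V"
  shows "d w u \<le> Suc (d w v)" "d w v \<le> Suc (d w u)"
  using dist_step[OF assms] dist_sym E_V assms by (metis)+

lemma geodesic:
  assumes "walk E f n" "f 0 = u" "f n = v" "d u v = n" "u \<in> V" "i \<le> n"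
  shows "d u (f i) = i \<and> d (f i) v = n - i"
proof -
  have fV: "f j \<in> V" if "j \<le> n" for j
  proof (cases "n = 0")
    case True thus ?thesis using assms that by auto
  next
    case False thus ?thesis using walk_V assms that by auto
  qed
  have a: "d u (f i) \<le> i" using dist_le[OF walk_take[OF assms(1,6)]] assms by simp
  have b: "d (f i) v \<le> n - i" using dist_le[OF walk_shift[OF assms(1,6)]] assms by simp
  have c: "n \<le> d u (f i) + d (f i) v" using dist_tri[OF assms(5) fV[OF assms(6)] fV[of n]] assms by simp
  show ?thesis using a b c assms(6) by arith
qed

lemma dist_pred:
  assumes "u \<in> V" "w \<in> V" "d u w = Suc k"
  shows "\<exists>v. E u v \<and> d v w = k"
proof -
  obtain f where f: "walk E f (d u w)" "f 0 = u" "f (d u w) = w" using dist_ex assms by blast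
  have "E u (f 1)" using f assms unfolding walk_def by auto
  moreover have "d (f 1) w = k" using geodesic[OF f(1) f(2) f(3) refl assms(1), of 1] assms by simp
  ultimately show ?thesis by blast
qed

end



definition iwalk :: "('a \<Rightarrow> 'a \<Rightarrow> bool) \<Rightarrow> 'a set \<Rightarrow> 'a \<Rightarrow> 'a \<Rightarrow> (nat \<Rightarrow> 'a) \<Rightarrow> nat \<Rightarrow> bool" where
  "iwalk E W p q f n \<longleftrightarrow> walk E f n \<and> f 0 = p \<and> f n = q \<and> 2 \<le> n \<and> (\<forall>i. 0 < i \<and> i < n \<longrightarrow> f i \<in> W)"

lemma iwalk_shortcut:
  assumes "iwalk E W p q f n" "i + 2 \<le> j" "j \<le> n" "E (f i) (f j)" "\<not> (i = 0 \<and> j = n)"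
  shows "iwalk E W p q (\<lambda>k. if k \<le> i then f k else f (k + (j - i - 1))) (n - (j - i - 1))"
proof -
  let ?c = "j - i - 1"
  let ?g = "\<lambda>k. if k \<le> i then f k else f (k + ?c)"
  have w: "walk E f n" "f 0 = p" "f n = q" "2 \<le> n" "\<forall>k. 0 < k \<and> k < n \<longrightarrow> f k \<in> W"
    using assms(1) unfolding iwalk_def by auto
  have "walk E ?g (n - ?c)" unfolding walk_def
  proof (intro allI impI)
    fix k assume k: "k < n - ?c"
    show "E (?g k) (?g (Suc k))"
    proof (cases "k < i")
      case True thus ?thesis using w(1) assms(2,3) unfolding walk_def by auto
    next
      case False
      show ?thesis
      proof (cases "k = i")
        case True
        have "Suc i + ?c = j" using assms(2) by auto
        thus ?thesis using True assms(4) by auto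
      next
        case False
        hence "k > i" using \<open>\<not> k < i\<close> by auto
        have "k + ?c < n" using k assms(2,3) by auto
        hence "E (f (k + ?c)) (f (Suc (k + ?c)))" using w(1) unfolding walk_def by auto
        thus ?thesis using \<open>k > i\<close> by auto
      qed
    qed
  qed
  moreover have "?g 0 = p" using w by auto
  moreover have "?g (n - ?c) = q" using w assms(2,3) by auto
  moreover have "2 \<le> n - ?c" using assms(2,3,5) by auto
  moreover have "\<forall>k. 0 < k \<and> k < n - ?c \<longrightarrow> ?g k \<in> W"
    using w(5) assms(2,3) by auto
  ultimately show ?thesis unfolding iwalk_def by blast
qed

context sg
begin

lemma iwalk_min:
  assumes "iwalk E W p q f0 n0" "p \<notin> W" "q \<notin> W" "p \<noteq> q"
  shows "\<exists>f n. iwalk E W p q f n \<and> inj_on f {..n} \<and>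
     (\<forall>i\<le>n. \<forall>j\<le>n. E (f i) (f j) \<longleftrightarrow> (j = Suc i \<or> i = Suc j \<or> (i = 0 \<and> j = n \<and> E p q) \<or> (j = 0 \<and> i = n \<and> E p q)))"
proof -
  define P where "P n \<longleftrightarrow> (\<exists>f. iwalk E W p q f n)" for n
  have "P n0" using assms(1) unfolding P_def by blast
  define n where "n = (LEAST n. P n)"
  have Pn: "P n" unfolding n_def using \<open>P n0\<close> by (rule LeastI)
  have minn: "\<And>m. P m \<Longrightarrow> n \<le> m" unfolding n_def by (rule Least_le)
  obtain f where f: "iwalk E W p q f n" using Pn unfolding P_def by blast
  have w: "walk E f n" "f 0 = p" "f n = q" "2 \<le> n" "\<forall>k. 0 < k \<and> k < n \<longrightarrow> f k \<in> W"
    using f unfolding iwalk_def by auto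
  have nochord: "\<not> E (f i) (f j)" if "i + 2 \<le> j" "j \<le> n" "\<not> (i = 0 \<and> j = n)" for i j
  proof
    assume "E (f i) (f j)"
    from iwalk_shortcut[OF f that(1,2) this that(3)]
    have "P (n - (j - i - 1))" unfolding P_def by blast
    from minn[OF this] that show False by auto
  qed
  have inj: "inj_on f {..n}"
  proof (rule inj_onI, rule ccontr)
    fix i j assume ij: "i \<in> {..n}" "j \<in> {..n}" "f i = f j" "i \<noteq> j"
    have key: False if "a < b" "a \<le> n" "b \<le> n" "f a = f b" for a b
    proof -
      have "a \<noteq> 0"
      proof
        assume "a = 0"
        show False
        proof (cases "b = n")
          case True thus False using that w \<open>a = 0\<close> assms(4) by auto
        next
          case False thus False using that w \<open>a = 0\<close> assms(2) by force
        qed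
      qed
      have "b \<noteq> n"
      proof
        assume "b = n"
        thus False using that w \<open>a \<noteq> 0\<close> assms(3) by force
      qed
      have "E (f b) (f (Suc b))" using w(1) \<open>b \<noteq> n\<close> that unfolding walk_def by auto
      hence "E (f a) (f (Suc b))" using that by simp
      thus False using nochord[of a "Suc b"] that \<open>a \<noteq> 0\<close> \<open>b \<noteq> n\<close> by auto
    qed
    show False using ij key[of i j] key[of j i] by (cases "i < j") auto
  qed
  have adj: "E (f i) (f j) \<longleftrightarrow> (j = Suc i \<or> i = Suc j \<or> (i = 0 \<and> j = n \<and> E p q) \<or> (j = 0 \<and> i = n \<and> E p q))"
    if "i \<le> n" "j \<le> n" for i j
  proof
    assume e: "E (f i) (f j)"
    have "i \<noteq> j" using e E_irr by auto
    show "j = Suc i \<or> i = Suc j \<or> (i = 0 \<and> j = n \<and> E p q) \<or> (j = 0 \<and> i = n \<and> E p q)"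
    proof (rule ccontr)
      assume c: "\<not> ?thesis"
      show False
      proof (cases "i < j")
        case True
        thus False using nochord[of i j] e c that w by force
      next
        case False
        hence "j < i" using \<open>i \<noteq> j\<close> by auto
        thus False using nochord[of j i] E_sym[OF e] c that w by force
      qed
    qed
  next
    assume "j = Suc i \<or> i = Suc j \<or> (i = 0 \<and> j = n \<and> E p q) \<or> (j = 0 \<and> i = n \<and> E p q)"
    thus "E (f i) (f j)" using w that E_sym unfolding walk_def by auto
  qed
  show ?thesis using f inj adj by blast
qed

end

locale chg = sg +
  assumes chord: "chordal V E"
begin

lemma no_cycle:
  assumes N: "4 \<le> N" and inj: "inj_on h {..<N}" and hV: "\<forall>i<N. h i \<in> V"
    and adj: "\<forall>i<N. \<forall>j<N. E (h i) (h j) \<longleftrightarrow> (j = Suc i \<or> i = Suc j \<or> (i = 0 \<and> j = N - 1) \<or> (j = 0 \<and> i = N - 1))"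
  shows False
proof -
  let ?vs = "map h [0..<N]"
  have "distinct ?vs" using inj by (simp add: distinct_map atLeast0LessThan)
  moreover have "set ?vs \<subseteq> V" using hV by auto
  moreover have "length ?vs \<ge> 3" using N by simp
  moreover have "\<forall>i<length ?vs. \<forall>j<length ?vs.
        E (?vs ! i) (?vs ! j) \<longleftrightarrow> (j = Suc i mod length ?vs \<or> i = Suc j mod length ?vs)"
  proof (intro allI impI)
    fix i j assume i: "i < length ?vs" and j: "j < length ?vs"
    have i': "i < N" and j': "j < N" using i j by auto
    have m1: "Suc i mod N = (if Suc i = N then 0 else Suc i)" using i' by (simp add: mod_Suc)
    have m2: "Suc j mod N = (if Suc j = N then 0 else Suc j)" using j' by (simp add: mod_Suc)
    have e: "?vs ! i = h i" "?vs ! j = h j" "length ?vs = N" using i' j' by simp_all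
    have ar: "(j = Suc i mod N \<or> i = Suc j mod N) \<longleftrightarrow> (j = Suc i \<or> i = Suc j \<or> (i = 0 \<and> j = N - 1) \<or> (j = 0 \<and> i = N - 1))"
      using m1 m2 i' j' N by auto
    show "E (?vs ! i) (?vs ! j) \<longleftrightarrow> (j = Suc i mod length ?vs \<or> i = Suc j mod length ?vs)"
      unfolding e using adj[rule_format, OF i' j'] ar by simp
  qed
  ultimately have "induced_cycle V E ?vs" unfolding induced_cycle_def by blast
  moreover have "length ?vs \<ge> 4" using N by simp
  ultimately show False using chord unfolding chordal_def by blast
qed

lemma GL1:
  assumes "iwalk E W p q f0 n0" "p \<notin> W" "q \<notin> W" "p \<noteq> q" "E p q"
  shows "\<exists>u\<in>W. E p u \<and> E u q"
proof -
  obtain f n where f: "iwalk E W p q f n" "inj_on f {..n}"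
    "\<forall>i\<le>n. \<forall>j\<le>n. E (f i) (f j) \<longleftrightarrow> (j = Suc i \<or> i = Suc j \<or> (i = 0 \<and> j = n \<and> E p q) \<or> (j = 0 \<and> i = n \<and> E p q))"
    using iwalk_min[OF assms(1-4)] by blast
  have w: "walk E f n" "f 0 = p" "f n = q" "2 \<le> n" "\<forall>k. 0 < k \<and> k < n \<longrightarrow> f k \<in> W"
    using f unfolding iwalk_def by auto
  show ?thesis
  proof (cases "n = 2")
    case True
    have "E (f 0) (f (Suc 0))" "E (f 1) (f (Suc 1))" using w(1) True unfolding walk_def by auto
    hence "E (f 0) (f 1)" "E (f 1) (f 2)" by (simp_all add: numeral_2_eq_2)
    thus ?thesis using w True by (intro bexI[of _ "f 1"]) auto
  next
    case False
    have "inj_on f {..<Suc n}" using f(2) by (simp add: lessThan_Suc_atMost)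
    moreover have "\<forall>i<Suc n. f i \<in> V" using walk_V[OF w(1)] w(4) by auto
    moreover have "\<forall>i<Suc n. \<forall>j<Suc n. E (f i) (f j) \<longleftrightarrow> (j = Suc i \<or> i = Suc j \<or> (i = 0 \<and> j = Suc n - 1) \<or> (j = 0 \<and> i = Suc n - 1))"
    proof (intro allI impI)
      fix i j assume "i < Suc n" "j < Suc n"
      thus "E (f i) (f j) \<longleftrightarrow> (j = Suc i \<or> i = Suc j \<or> (i = 0 \<and> j = Suc n - 1) \<or> (j = 0 \<and> i = Suc n - 1))"
        using f(3)[rule_format, of i j] assms(5) by auto
    qed
    ultimately have False using no_cycle[of "Suc n" f] False w(4) by auto
    thus ?thesis ..
  qed
qed

lemma GL2:
  assumes "iwalk E W1 p q f0 n0" "iwalk E W2 p q g0 m0"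
    "p \<notin> W1 \<union> W2" "q \<notin> W1 \<union> W2" "p \<noteq> q" "W1 \<inter> W2 = {}"
    "\<forall>u\<in>W1. \<forall>v\<in>W2. \<not> E u v"
  shows "E p q"
proof (rule ccontr)
  assume npq: "\<not> E p q"
  have pq: "p \<notin> W1" "q \<notin> W1" "p \<notin> W2" "q \<notin> W2" using assms(3,4) by auto
  obtain f n where f: "iwalk E W1 p q f n" "inj_on f {..n}"
    "\<forall>i\<le>n. \<forall>j\<le>n. E (f i) (f j) \<longleftrightarrow> (j = Suc i \<or> i = Suc j \<or> (i = 0 \<and> j = n \<and> E p q) \<or> (j = 0 \<and> i = n \<and> E p q))"
    using iwalk_min[OF assms(1) pq(1) pq(2) assms(5)] by metis
  obtain g m where g: "iwalk E W2 p q g m" "inj_on g {..m}"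
    "\<forall>i\<le>m. \<forall>j\<le>m. E (g i) (g j) \<longleftrightarrow> (j = Suc i \<or> i = Suc j \<or> (i = 0 \<and> j = m \<and> E p q) \<or> (j = 0 \<and> i = m \<and> E p q))"
    using iwalk_min[OF assms(2) pq(3) pq(4) assms(5)] by metis
  have wf: "walk E f n" "f 0 = p" "f n = q" "2 \<le> n" "\<forall>k. 0 < k \<and> k < n \<longrightarrow> f k \<in> W1"
    using f unfolding iwalk_def by auto
  have wg: "walk E g m" "g 0 = p" "g m = q" "2 \<le> m" "\<forall>k. 0 < k \<and> k < m \<longrightarrow> g k \<in> W2"
    using g unfolding iwalk_def by auto
  have fa: "E (f i) (f j) \<longleftrightarrow> (j = Suc i \<or> i = Suc j)" if "i \<le> n" "j \<le> n" for i j
    using f(3)[rule_format, OF that] npq by auto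
  have ga: "E (g i) (g j) \<longleftrightarrow> (j = Suc i \<or> i = Suc j)" if "i \<le> m" "j \<le> m" for i j
    using g(3)[rule_format, OF that] npq by auto
  define h where "h k = (if k \<le> n then f k else g (n + m - k))" for k
  let ?N = "n + m"
  have cross: "\<not> E (f i) (g j) \<and> f i \<noteq> g j" if "0 < i" "i < n" "0 < j" "j < m" for i j
  proof -
    have "f i \<in> W1" using wf(5) that by blast
    moreover have "g j \<in> W2" using wg(5) that by blast
    ultimately show ?thesis using assms(6,7) by (metis IntI empty_iff)
  qed
  have hV: "\<forall>i<?N. h i \<in> V"
  proof (intro allI impI)
    fix i assume i: "i < ?N"
    show "h i \<in> V"
    proof (cases "i \<le> n")
      case True
      thus ?thesis unfolding h_def using walk_V[OF wf(1), of i] wf(4) by simp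
    next
      case False
      have "n + m - i \<le> m" using False by simp
      thus ?thesis unfolding h_def using walk_V[OF wg(1), of "n + m - i"] wg(4) False by simp
    qed
  qed
  have inj: "inj_on h {..<?N}"
  proof (rule inj_onI, rule ccontr)
    fix i j assume ij: "i \<in> {..<?N}" "j \<in> {..<?N}" "h i = h j" "i \<noteq> j"
    have key: False if "i \<le> n" "j > n" "i < ?N" "j < ?N" "f i = g (n + m - j)" for i j
    proof -
      have jj: "0 < n + m - j" "n + m - j < m" using that by auto
      show False
      proof (cases "i = 0")
        case True
        hence "g 0 = g (n + m - j)" using that wf wg by simp
        thus False using g(2) jj unfolding inj_on_def by fastforce
      next
        case False
        show False
        proof (cases "i = n")
          case True
          hence "g m = g (n + m - j)" using that wf wg by simp
          thus False using g(2) jj unfolding inj_on_def by fastforce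
        next
          case False
          thus False using cross[of i "n + m - j"] that jj \<open>i \<noteq> 0\<close> by auto
        qed
      qed
    qed
    show False
    proof (cases "i \<le> n")
      case True
      show False
      proof (cases "j \<le> n")
        case True
        thus False using \<open>i \<le> n\<close> ij f(2) unfolding h_def inj_on_def by auto
      next
        case False
        thus False using key[of i j] \<open>i \<le> n\<close> ij unfolding h_def by auto
      qed
    next
      case False
      show False
      proof (cases "j \<le> n")
        case True
        thus False using key[of j i] \<open>\<not> i \<le> n\<close> ij unfolding h_def by auto
      next
        case False
        have "n + m - i \<le> m" "n + m - j \<le> m" using \<open>\<not> i \<le> n\<close> False by auto
        hence "n + m - i = n + m - j" using g(2) ij \<open>\<not> i \<le> n\<close> False unfolding h_def inj_on_def by auto
        thus False using ij \<open>\<not> i \<le> n\<close> False by auto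
      qed
    qed
  qed
  have mix: "E (f i) (g (n + m - j)) \<longleftrightarrow> (j = Suc i \<or> (i = 0 \<and> j = ?N - 1))"
    if ij: "i \<le> n" "n < j" "j < ?N" for i j
  proof -
    have jj: "0 < n + m - j" "n + m - j < m" using ij by auto
    show ?thesis
    proof (cases "i = 0")
      case True
      have "E (g 0) (g (n + m - j)) \<longleftrightarrow> (n + m - j = Suc 0 \<or> 0 = Suc (n + m - j))"
        using ga[of 0 "n + m - j"] jj by simp
      moreover have "(n + m - j = Suc 0 \<or> 0 = Suc (n + m - j)) \<longleftrightarrow> (j = Suc i \<or> (i = 0 \<and> j = ?N - 1))"
        using True ij wf(4) by presburger
      ultimately show ?thesis using True wf(2) wg(2) by simp
    next
      case False
      show ?thesis
      proof (cases "i = n")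
        case True
        have "E (g m) (g (n + m - j)) \<longleftrightarrow> (n + m - j = Suc m \<or> m = Suc (n + m - j))"
          using ga[of m "n + m - j"] jj by simp
        moreover have "(n + m - j = Suc m \<or> m = Suc (n + m - j)) \<longleftrightarrow> (j = Suc i \<or> (i = 0 \<and> j = ?N - 1))"
          using True ij wf(4) by presburger
        ultimately show ?thesis using True wf(3) wg(3) by simp
      next
        case False
        have "\<not> E (f i) (g (n + m - j))" using cross[of i "n + m - j"] ij jj \<open>i \<noteq> 0\<close> False by auto
        moreover have "\<not> (j = Suc i \<or> (i = 0 \<and> j = ?N - 1))" using ij False \<open>i \<noteq> 0\<close> by presburger
        ultimately show ?thesis by blast
      qed
    qed
  qed
  have adj: "E (h i) (h j) \<longleftrightarrow> (j = Suc i \<or> i = Suc j \<or> (i = 0 \<and> j = ?N - 1) \<or> (j = 0 \<and> i = ?N - 1))"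
    if ij: "i < ?N" "j < ?N" for i j
  proof (cases "i \<le> n")
    case True
    show ?thesis
    proof (cases "j \<le> n")
      case True
      have "h i = f i" "h j = f j" using True \<open>i \<le> n\<close> by (simp_all add: h_def)
      moreover have "(j = Suc i \<or> i = Suc j \<or> (i = 0 \<and> j = ?N - 1) \<or> (j = 0 \<and> i = ?N - 1)) \<longleftrightarrow> (j = Suc i \<or> i = Suc j)"
        using True \<open>i \<le> n\<close> wg(4) by auto
      ultimately show ?thesis using fa[OF \<open>i \<le> n\<close> True] by simp
    next
      case False
      have "h i = f i" "h j = g (n + m - j)" using False \<open>i \<le> n\<close> by (simp_all add: h_def)
      moreover have "(j = Suc i \<or> i = Suc j \<or> (i = 0 \<and> j = ?N - 1) \<or> (j = 0 \<and> i = ?N - 1)) \<longleftrightarrow> (j = Suc i \<or> (i = 0 \<and> j = ?N - 1))"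
        using False \<open>i \<le> n\<close> by auto
      ultimately show ?thesis using mix[of i j] False \<open>i \<le> n\<close> ij by simp
    qed
  next
    case False
    show ?thesis
    proof (cases "j \<le> n")
      case True
      have "h j = f j" "h i = g (n + m - i)" using False True by (simp_all add: h_def)
      moreover have "(j = Suc i \<or> i = Suc j \<or> (i = 0 \<and> j = ?N - 1) \<or> (j = 0 \<and> i = ?N - 1)) \<longleftrightarrow> (i = Suc j \<or> (j = 0 \<and> i = ?N - 1))"
        using False True by auto
      moreover have "E (h i) (h j) \<longleftrightarrow> E (h j) (h i)" using E_sym by blast
      ultimately show ?thesis using mix[of j i] False True ij by simp
    next
      case False
      have "E (g (n + m - i)) (g (n + m - j)) \<longleftrightarrow> (n + m - j = Suc (n + m - i) \<or> n + m - i = Suc (n + m - j))"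
        using ga[of "n + m - i" "n + m - j"] \<open>\<not> i \<le> n\<close> False by simp
      moreover have "h i = g (n + m - i)" "h j = g (n + m - j)" using \<open>\<not> i \<le> n\<close> False by (simp_all add: h_def)
      moreover have "(n + m - j = Suc (n + m - i) \<or> n + m - i = Suc (n + m - j)) \<longleftrightarrow> (j = Suc i \<or> i = Suc j \<or> (i = 0 \<and> j = ?N - 1) \<or> (j = 0 \<and> i = ?N - 1))"
        using \<open>\<not> i \<le> n\<close> False ij by auto
      ultimately show ?thesis by simp
    qed
  qed
  have N4: "4 \<le> ?N" using wf(4) wg(4) by simp
  show False using no_cycle[OF N4 inj hV] adj by blast
qed

end



lemma iwalk_mono: "iwalk E W p q f n \<Longrightarrow> W \<subseteq> W' \<Longrightarrow> iwalk E W' p q f n"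
  unfolding iwalk_def by blast

context sg
begin

lemma desc:
  assumes "v \<in> V" "t \<in> V"
  shows "\<exists>f. walk E f (d v t) \<and> f 0 = v \<and> f (d v t) = t \<and> (\<forall>i\<le>d v t. d (f i) t = d v t - i \<and> f i \<in> V)"
proof -
  obtain f where f: "walk E f (d v t)" "f 0 = v" "f (d v t) = t" using dist_ex assms by blast
  have "\<forall>i\<le>d v t. d (f i) t = d v t - i \<and> f i \<in> V"
  proof (intro allI impI conjI)
    fix i assume i: "i \<le> d v t"
    show "d (f i) t = d v t - i" using geodesic[OF f refl assms(1) i] by simp
    show "f i \<in> V"
    proof (cases "d v t = 0")
      case True thus ?thesis using f assms i by auto
    next
      case False thus ?thesis using walk_V[OF f(1)] i by auto
    qed
  qed
  thus ?thesis using f by blast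
qed

lemma edge_layer:
  assumes "E u v" "t \<in> V"
  shows "d u t \<le> Suc (d v t)" "d v t \<le> Suc (d u t)"
  using dist_step[OF assms] by auto

lemma lower_walk:
  assumes "p \<in> V" "q \<in> V" "t \<in> V" "d p t = k" "d q t = k" "1 \<le> k"
  shows "\<exists>h. iwalk E {w\<in>V. d w t < k} p q h (k + k)"
proof -
  obtain f where f: "walk E f k" "f 0 = p" "f k = t" "\<forall>i\<le>k. d (f i) t = k - i \<and> f i \<in> V"
    using desc[OF assms(1,3)] assms(4) by auto
  obtain g where g: "walk E g k" "g 0 = q" "g k = t" "\<forall>i\<le>k. d (g i) t = k - i \<and> g i \<in> V"
    using desc[OF assms(2,3)] assms(5) by auto
  have gr: "walk E (\<lambda>i. g (k - i)) k" using walk_rev[OF g(1)] .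
  define h where "h = (\<lambda>i. if i \<le> k then f i else (\<lambda>i. g (k - i)) (i - k))"
  have "walk E h (k + k)" unfolding h_def using walk_append[OF f(1) gr] f(3) g(3) by simp
  moreover have "h 0 = p" using f by (simp add: h_def)
  moreover have "h (k + k) = q" using g assms(6) by (simp add: h_def)
  moreover have "2 \<le> k + k" using assms(6) by simp
  moreover have "\<forall>i. 0 < i \<and> i < k + k \<longrightarrow> h i \<in> {w\<in>V. d w t < k}"
  proof (intro allI impI)
    fix i assume i: "0 < i \<and> i < k + k"
    show "h i \<in> {w\<in>V. d w t < k}"
    proof (cases "i \<le> k")
      case True thus ?thesis using f(4) i by (auto simp: h_def)
    next
      case False
      have "k - (i - k) \<le> k" by simp
      thus ?thesis using g(4)[rule_format, of "k - (i - k)"] False i by (auto simp: h_def)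
    qed
  qed
  ultimately show ?thesis unfolding iwalk_def by blast
qed

end

context chg
begin

lemma K_lower:
  assumes "E p q" "t \<in> V" "d p t = k" "d q t = k" "1 \<le> k"
  shows "\<exists>c. E p c \<and> E c q \<and> d c t + 1 = k"
proof -
  have pq: "p \<in> V" "q \<in> V" using E_V assms(1) by auto
  obtain h where h: "iwalk E {w\<in>V. d w t < k} p q h (k + k)" using lower_walk[OF pq assms(2-5)] by blast
  obtain c where c: "c \<in> {w\<in>V. d w t < k}" "E p c" "E c q"
    using GL1[OF h] assms E_ne by fastforce
  have "k \<le> Suc (d c t)" using edge_layer[OF c(2) assms(2)] assms(3) by simp
  thus ?thesis using c by auto
qed

lemma K_tri:
  assumes "p \<in> V" "q \<in> V" "t \<in> V" "p \<noteq> q" "d p t = k" "d q t = k" "1 \<le> k"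
    and up: "iwalk E {w\<in>V. Suc k \<le> d w t} p q f n"
  shows "E p q \<and> (\<exists>a. E p a \<and> E a q \<and> Suc k \<le> d a t)"
proof -
  obtain h where h: "iwalk E {w\<in>V. d w t < k} p q h (k + k)" using lower_walk[OF assms(1-3,5-7)] by blast
  have noE: "\<forall>u\<in>{w\<in>V. Suc k \<le> d w t}. \<forall>v\<in>{w\<in>V. d w t < k}. \<not> E u v"
    using edge_layer[OF _ assms(3)] by fastforce
  have dj: "{w\<in>V. Suc k \<le> d w t} \<inter> {w\<in>V. d w t < k} = {}" by auto
  have epq: "E p q"
    using GL2[OF up h _ _ assms(4) dj noE] assms(5,6) by auto
  obtain a where "a \<in> {w\<in>V. Suc k \<le> d w t}" "E p a" "E a q"
    using GL1[OF up _ _ assms(4) epq] assms(5,6) by auto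
  thus ?thesis using epq by auto
qed

end



lemma first_exit:
  assumes "R\<^sup>*\<^sup>* a b" "P a" "\<not> P b"
  shows "\<exists>u v. (\<lambda>x y. R x y \<and> P x \<and> P y)\<^sup>*\<^sup>* a u \<and> P u \<and> R u v \<and> \<not> P v"
  using assms
proof (induction rule: converse_rtranclp_induct)
  case base thus ?case by simp
next
  case (step y z)
  show ?case
  proof (cases "P z")
    case True
    then obtain u v where uv: "(\<lambda>x y. R x y \<and> P x \<and> P y)\<^sup>*\<^sup>* z u" "P u" "R u v" "\<not> P v"
      using step by blast
    moreover have yz: "(\<lambda>x y. R x y \<and> P x \<and> P y) y z" using step True by simp
    have "(\<lambda>x y. R x y \<and> P x \<and> P y)\<^sup>*\<^sup>* y u"
      by (rule converse_rtranclp_into_rtranclp[OF yz uv(1)])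
    thus ?thesis using uv by blast
  next
    case False
    thus ?thesis using step by blast
  qed
qed

lemma reach_trans: "reach_in E S u v \<Longrightarrow> reach_in E S v w \<Longrightarrow> reach_in E S u w"
  unfolding reach_in_def by auto

lemma reach_edge: "u \<in> S \<Longrightarrow> v \<in> S \<Longrightarrow> E u v \<Longrightarrow> reach_in E S u v"
  unfolding reach_in_def by auto

lemma reach_refl: "u \<in> S \<Longrightarrow> reach_in E S u u"
  unfolding reach_in_def by auto

context sg
begin

lemma reach_sym:
  assumes "reach_in E S u v" shows "reach_in E S v u"
proof -
  obtain f n where f: "walk E f n" "f 0 = u" "f n = v" "\<forall>i\<le>n. f i \<in> S"
    using reach_walk[OF assms] by blast
  have "walk E (\<lambda>i. f (n - i)) n" using walk_rev[OF f(1)] .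
  from walk_reach[OF this] show ?thesis using f by auto
qed

lemma sep:
  assumes "u \<in> V - S" "v \<in> V - S" "\<not> reach_in E (V - S) u v"
  shows "\<exists>s\<in>S. d u v = d u s + d s v"
proof -
  obtain f where f: "walk E f (d u v)" "f 0 = u" "f (d u v) = v" using dist_ex assms by blast
  have "\<not> (\<forall>i\<le>d u v. f i \<in> V - S)"
  proof
    assume "\<forall>i\<le>d u v. f i \<in> V - S"
    from walk_reach[OF f(1) this] f assms(3) show False by simp
  qed
  then obtain i where i: "i \<le> d u v" "f i \<notin> V - S" by blast
  have "d u v \<noteq> 0"
  proof
    assume "d u v = 0" thus False using i f assms(1) by auto
  qed
  hence "f i \<in> V" using walk_V[OF f(1)] i by auto
  hence "f i \<in> S" using i by auto
  moreover have "d u (f i) = i \<and> d (f i) v = d u v - i" using geodesic[OF f refl _ i(1)] assms by auto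
  ultimately show ?thesis using i by (intro bexI[of _ "f i"]) auto
qed

end

context chg
begin

lemma fat_half:
  assumes cc: "E c c'" and tV: "t \<in> V" "t \<noteq> c" "t \<noteq> c'"
   and lt: "d c t < d c' t"
   and w: "reach_in E (V - {c,c'}) t w" "E w c" "E w c'"
  shows "\<exists>a b1 b2. b1 \<noteq> b2 \<and> E a b1 \<and> E a b2 \<and> Suc (d b1 t) = d a t \<and> Suc (d b2 t) = d a t
     \<and> d a t = Suc (min (d c t) (d c' t)) \<and> (\<forall>cc\<in>{c,c'}. Suc (d cc t) = d a t \<longrightarrow> E a cc)
     \<and> (\<forall>v\<in>{a,b1,b2}. v = c \<or> v = c' \<or> E v c \<or> E v c')"
proof -
  have cV: "c \<in> V" "c' \<in> V" using E_V cc by auto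
  define \<delta> where "\<delta> = d c t"
  have c'd: "d c' t = Suc \<delta>" using edge_layer[OF cc tV(1)] lt unfolding \<delta>_def by auto
  have d1: "1 \<le> \<delta>"
  proof (rule ccontr)
    assume "\<not> 1 \<le> \<delta>"
    hence "d c t = 0" unfolding \<delta>_def by simp
    thus False using dist_0[OF cV(1) tV(1)] tV by auto
  qed
  have wS: "w \<in> V - {c,c'}" using w(1) unfolding reach_in_def by auto
  have wd: "\<delta> \<le> d w t" "d w t \<le> Suc \<delta>"
    using edge_layer[OF w(2) tV(1)] edge_layer[OF w(3) tV(1)] c'd unfolding \<delta>_def by auto
  have mn: "min (d c t) (d c' t) = \<delta>" using c'd unfolding \<delta>_def by simp
  show ?thesis
  proof (cases "d w t = \<delta>")
    case True
    show ?thesis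
      apply (rule exI[of _ c'], rule exI[of _ c], rule exI[of _ w])
      using True c'd mn wS cc w E_sym unfolding \<delta>_def by auto
  next
    case False
    hence wd2: "d w t = Suc \<delta>" using wd by simp
    define R where "R = (\<lambda>x y. x \<in> V - {c,c'} \<and> y \<in> V - {c,c'} \<and> E x y)"
    define P where "P = (\<lambda>y. Suc \<delta> \<le> d y t)"
    have "R\<^sup>*\<^sup>* w t" using reach_sym[OF w(1)] unfolding reach_in_def R_def by auto
    moreover have "P w" using wd2 unfolding P_def by simp
    moreover have "\<not> P t" unfolding P_def using dist_self[of t] by simp
    ultimately obtain u v where uv: "(\<lambda>x y. R x y \<and> P x \<and> P y)\<^sup>*\<^sup>* w u" "P u" "R u v" "\<not> P v"
      using first_exit[of R w t P] by blast
    have vS: "v \<in> V - {c,c'}" "E u v" using uv(3) unfolding R_def by auto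
    have uV: "u \<in> V" using vS E_V by auto
    have vd: "d v t = \<delta>" using uv(2,4) edge_layer[OF vS(2) tV(1)] unfolding P_def by auto
    define S where "S = {y \<in> V - {c,c'}. P y}"
    have "(\<lambda>x y. x \<in> S \<and> y \<in> S \<and> E x y)\<^sup>*\<^sup>* w u"
      using uv(1) unfolding S_def R_def
      by (rule rtranclp_mono[THEN predicate2D, rotated]) auto
    moreover have "u \<in> S" using uv(2,3) unfolding R_def S_def by auto
    ultimately have "reach_in E S w u" using wS \<open>P w\<close> unfolding reach_in_def S_def by auto
    then obtain g n where g: "walk E g n" "g 0 = w" "g n = u" "\<forall>i\<le>n. g i \<in> S"
      using reach_walk by blast
    define h where "h i = (if i = 0 then c else if i \<le> Suc n then g (i - 1) else v)" for i
    have "walk E h (Suc (Suc n))" unfolding walk_def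
    proof (intro allI impI)
      fix i assume i: "i < Suc (Suc n)"
      show "E (h i) (h (Suc i))"
      proof (cases "i = 0")
        case True thus ?thesis using g(2) E_sym[OF w(2)] by (simp add: h_def)
      next
        case False
        show ?thesis
        proof (cases "i = Suc n")
          case True thus ?thesis using g(3) vS by (simp add: h_def)
        next
          case False
          hence "i - 1 < n" using \<open>i \<noteq> 0\<close> i by auto
          hence "E (g (i - 1)) (g (Suc (i - 1)))" using g(1) unfolding walk_def by auto
          moreover have "Suc (i - 1) = i" using \<open>i \<noteq> 0\<close> by simp
          ultimately show ?thesis using False \<open>i \<noteq> 0\<close> i by (simp add: h_def)
        qed
      qed
    qed
    moreover have "\<forall>i. 0 < i \<and> i < Suc (Suc n) \<longrightarrow> h i \<in> {y\<in>V. Suc \<delta> \<le> d y t}"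
      using g(4) unfolding h_def S_def P_def by auto
    ultimately have up: "iwalk E {y\<in>V. Suc \<delta> \<le> d y t} c v h (Suc (Suc n))"
      unfolding iwalk_def h_def by auto
    have cv: "c \<noteq> v" using vS by auto
    obtain a where a: "E c a" "E a v" "Suc \<delta> \<le> d a t" and ecv: "E c v"
      using K_tri[OF cV(1) _ tV(1) cv _ vd d1 up] vS unfolding \<delta>_def by auto
    have ad: "d a t = Suc \<delta>" using a(3) edge_layer[OF a(1) tV(1)] unfolding \<delta>_def by auto
    show ?thesis
      apply (rule exI[of _ a], rule exI[of _ c], rule exI[of _ v])
      using cv a ad vd mn ecv E_sym c'd unfolding \<delta>_def by auto
  qed
qed

lemma fat:
  assumes cc: "E c c'" and tV: "t \<in> V" "t \<noteq> c" "t \<noteq> c'"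
   and x: "E x c" "E x c'" "d x t = Suc (min (d c t) (d c' t))"
   and w: "reach_in E (V - {c,c'}) t w" "E w c" "E w c'"
  shows "\<exists>a b1 b2. b1 \<noteq> b2 \<and> E a b1 \<and> E a b2 \<and> Suc (d b1 t) = d a t \<and> Suc (d b2 t) = d a t
     \<and> d a t = Suc (min (d c t) (d c' t)) \<and> (\<forall>cc\<in>{c,c'}. Suc (d cc t) = d a t \<longrightarrow> E a cc)
     \<and> (\<forall>v\<in>{a,b1,b2}. v = c \<or> v = c' \<or> E v c \<or> E v c')"
proof (cases "d c t = d c' t")
  case True
  show ?thesis
    apply (rule exI[of _ x], rule exI[of _ c], rule exI[of _ c'])
    using True x cc E_ne by auto
next
  case False
  show ?thesis
  proof (cases "d c t < d c' t")
    case True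
    thus ?thesis using fat_half[OF cc tV True w] by blast
  next
    case False
    hence lt: "d c' t < d c t" using \<open>d c t \<noteq> d c' t\<close> by auto
    have w': "reach_in E (V - {c',c}) t w" using w(1) by (simp add: insert_commute)
    obtain a b1 b2 where ab: "b1 \<noteq> b2 \<and> E a b1 \<and> E a b2 \<and> Suc (d b1 t) = d a t \<and> Suc (d b2 t) = d a t
     \<and> d a t = Suc (min (d c' t) (d c t)) \<and> (\<forall>cc\<in>{c',c}. Suc (d cc t) = d a t \<longrightarrow> E a cc)
     \<and> (\<forall>v\<in>{a,b1,b2}. v = c' \<or> v = c \<or> E v c' \<or> E v c)"
      using fat_half[OF E_sym[OF cc] tV(1,3,2) lt w' w(3,2)] by blast
    show ?thesis
      apply (rule exI[of _ a], rule exI[of _ b1], rule exI[of _ b2])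
      using ab by (auto simp: min.commute)
  qed
qed

end



locale slc = chg +
  fixes a t D
  assumes aV: "a \<in> V" and tV: "t \<in> V" and Dd: "d a t = D" and D3: "3 \<le> D"
begin

definition S :: "nat \<Rightarrow> 'a set" where
  "S k = {v\<in>V. d v a = k \<and> d v t = D - k}"

lemma S_V: "v \<in> S k \<Longrightarrow> v \<in> V" unfolding S_def by auto

lemma Dsym: "d t a = D" using dist_sym[OF aV tV] Dd by simp

lemma S_le: assumes "v \<in> S k" shows "k \<le> D"
proof -
  have v: "v \<in> V" "d v a = k" "d v t = D - k" using assms unfolding S_def by auto
  show ?thesis
  proof (cases "d v t = 0")
    case True
    hence "v = t" using dist_0[OF v(1) tV] by simp
    thus ?thesis using v Dsym by simp
  next
    case False thus ?thesis using v by simp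
  qed
qed

lemma S_disj: "v \<in> S k \<Longrightarrow> v \<in> S l \<Longrightarrow> k = l" unfolding S_def by auto

lemma S0: "S 0 = {a}"
proof -
  have "a \<in> S 0" using aV Dd dist_self[of a] unfolding S_def by auto
  moreover have "v = a" if "v \<in> S 0" for v using that dist_0[OF _ aV] unfolding S_def by auto
  ultimately show ?thesis by blast
qed

lemma SD: "S D = {t}"
proof -
  have "t \<in> S D" using tV Dsym dist_self[of t] unfolding S_def by auto
  moreover have "v = t" if "v \<in> S D" for v using that dist_0[OF _ tV] unfolding S_def by auto
  ultimately show ?thesis by blast
qed

lemma S_adj:
  assumes "u \<in> S k" "v \<in> S l" "E u v"
  shows "l \<le> Suc k \<and> k \<le> Suc l"
  using edge_layer[OF assms(3) aV] assms unfolding S_def by auto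

lemma S_mem:
  assumes "v \<in> V" "d v a = k" "d v t \<le> D - k"
  shows "v \<in> S k"
proof -
  have "D \<le> d a v + d v t" using dist_tri[OF aV assms(1) tV] Dd by simp
  moreover have "d a v = d v a" using dist_sym[OF aV assms(1)] .
  ultimately show ?thesis using assms unfolding S_def by auto
qed

lemma S_mem2:
  assumes "v \<in> V" "d v t = D - k" "d v a \<le> k" "k \<le> D"
  shows "v \<in> S k"
proof -
  have "D \<le> d a v + d v t" using dist_tri[OF aV assms(1) tV] Dd by simp
  moreover have "d a v = d v a" using dist_sym[OF aV assms(1)] .
  ultimately show ?thesis using assms unfolding S_def by auto
qed

lemma S_back:
  assumes "u \<in> S k" "0 < k"
  shows "\<exists>v\<in>S (k - 1). E u v"
proof -
  have u: "u \<in> V" "d u a = k" "d u t = D - k" using assms unfolding S_def by auto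
  obtain v where v: "E u v" "d v a = k - 1" using dist_pred[OF u(1) aV, of "k - 1"] u assms(2) by auto
  have vV: "v \<in> V" using E_V v by auto
  have "d v t \<le> Suc (d u t)" using edge_layer[OF v(1) tV] by simp
  hence "d v t \<le> D - (k - 1)" using u assms S_le[OF assms(1)] by arith
  thus ?thesis using S_mem[OF vV v(2)] v(1) by blast
qed

lemma S_fwd:
  assumes "u \<in> S k" "k < D"
  shows "\<exists>v\<in>S (Suc k). E u v"
proof -
  have u: "u \<in> V" "d u a = k" "d u t = D - k" using assms unfolding S_def by auto
  have "d u t = Suc (D - Suc k)" using u assms(2) by simp
  then obtain v where v: "E u v" "d v t = D - Suc k" using dist_pred[OF u(1) tV] by blast
  have vV: "v \<in> V" using E_V v by auto
  have "d v a \<le> Suc (d u a)" using edge_layer[OF v(1) aV] by simp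
  thus ?thesis using S_mem2[OF vV v(2)] v(1) u assms(2) by auto
qed

lemma S_ne: "k \<le> D \<Longrightarrow> S k \<noteq> {}"
proof (induction k)
  case 0 thus ?case using S0 by auto
next
  case (Suc k)
  then obtain u where "u \<in> S k" by auto
  thus ?case using S_fwd[of u k] Suc by auto
qed

lemma S_fin: "finite (S k)"
  using finV unfolding S_def by auto

lemma S_clique:
  assumes "u \<in> S k" "v \<in> S k" "u \<noteq> v" "1 \<le> k" "k < D"
  shows "E u v"
proof -
  have u: "u \<in> V" "d u a = k" "d u t = D - k" and v: "v \<in> V" "d v a = k" "d v t = D - k"
    using assms unfolding S_def by auto
  have k1: "1 \<le> D - k" using assms(5) by simp
  obtain h where h: "iwalk E {w\<in>V. d w t < D - k} u v h ((D - k) + (D - k))"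
    using lower_walk[OF u(1) v(1) tV u(3) v(3) k1] by auto
  have sub: "{w\<in>V. d w t < D - k} \<subseteq> {w\<in>V. Suc k \<le> d w a}"
  proof
    fix w assume w: "w \<in> {w\<in>V. d w t < D - k}"
    have "D \<le> d a w + d w t" using dist_tri[OF aV _ tV, of w] w Dd by auto
    moreover have "d a w = d w a" using dist_sym[OF aV, of w] w by auto
    ultimately show "w \<in> {w\<in>V. Suc k \<le> d w a}" using w by auto
  qed
  show ?thesis using K_tri[OF u(1) v(1) aV assms(3) u(2) v(2) assms(4) iwalk_mono[OF h sub]] by blast
qed

lemma S_common:
  assumes "u \<in> S k" "v \<in> S k" "u \<noteq> v" "1 \<le> k" "k < D"
  shows "\<exists>c\<in>S (Suc k). E u c \<and> E v c"
proof -
  have u: "u \<in> V" "d u a = k" "d u t = D - k" and v: "v \<in> V" "d v a = k" "d v t = D - k"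
    using assms unfolding S_def by auto
  have k1: "1 \<le> D - k" using assms(5) by simp
  obtain c where c: "E u c" "E c v" "d c t + 1 = D - k"
    using K_lower[OF S_clique[OF assms] tV u(3) v(3) k1] by auto
  have cV: "c \<in> V" using E_V c by auto
  have "d c a \<le> Suc k" using edge_layer[OF c(1) aV] u by simp
  hence "c \<in> S (Suc k)" using S_mem2[OF cV, of "Suc k"] c assms(5) by auto
  thus ?thesis using c E_sym by blast
qed

lemma S_single_back:
  assumes "u \<in> S k" "v \<in> S (Suc k)" "card (S k) \<le> 1"
  shows "E u v"
proof -
  obtain w where w: "w \<in> S k" "E v w" using S_back[OF assms(2)] by auto
  have "\<forall>x\<in>S k. \<forall>y\<in>S k. x = y" using card_le_Suc0_iff_eq[OF S_fin] assms(3) by auto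
  hence "w = u" using assms(1) w(1) by blast
  thus ?thesis using w E_sym by blast
qed

lemma S_single_fwd:
  assumes "u \<in> S k" "v \<in> S (Suc k)" "card (S (Suc k)) \<le> 1"
  shows "E u v"
proof -
  have "k < D" using S_le[OF assms(2)] by simp
  then obtain w where w: "w \<in> S (Suc k)" "E u w" using S_fwd[OF assms(1)] by auto
  have "\<forall>x\<in>S (Suc k). \<forall>y\<in>S (Suc k). x = y" using card_le_Suc0_iff_eq[OF S_fin] assms(3) by auto
  hence "w = v" using assms(2) w(1) by blast
  thus ?thesis using w by blast
qed

end



definition sig :: "nat \<Rightarrow> nat \<Rightarrow> nat" where
 "sig q u = (if u = 0 then 0 else if u \<le> 2 then 1 else if u = 3 then Suc q else if u \<le> 5 then q else u - 4)"

lemma H_sig: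
  assumes "1 \<le> i" "u \<in> H_V i" "v \<in> H_V i"
  shows "H_E i u v \<longleftrightarrow> (u \<noteq> v \<and> sig (i + 2) u \<le> Suc (sig (i + 2) v) \<and> sig (i + 2) v \<le> Suc (sig (i + 2) u))"
  using assms unfolding H_E_def H_E0_def H_V_def sig_def by auto

lemma six: "u = 0 \<or> u = 1 \<or> u = 2 \<or> u = 3 \<or> u = 4 \<or> u = 5 \<or> 6 \<le> (u::nat)" by arith

lemma sig_eq:
  assumes "1 \<le> i" "u \<in> H_V i" "v \<in> H_V i" "sig (i + 2) u = sig (i + 2) v" "u \<noteq> v"
  shows "(u = 1 \<and> v = 2) \<or> (u = 2 \<and> v = 1) \<or> (u = 4 \<and> v = 5) \<or> (u = 5 \<and> v = 4)"
  using six[of u] six[of v] assms unfolding H_V_def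
  by (elim disjE) (simp_all add: sig_def)

lemma sig_top:
  assumes "1 \<le> i" "u \<in> H_V i" "v \<in> H_V i" "sig (i + 2) v = Suc (sig (i + 2) u)" "sig (i + 2) u = i + 2"
  shows "(u = 4 \<or> u = 5) \<and> v = 3"
  using six[of u] six[of v] assms unfolding H_V_def
  by (elim disjE) (simp_all add: sig_def)

lemma card2_ex: "finite A \<Longrightarrow> 2 \<le> card A \<Longrightarrow> x \<in> A \<Longrightarrow> \<exists>y\<in>A. y \<noteq> x"
proof (rule ccontr)
  assume as: "finite A" "2 \<le> card A" "x \<in> A" "\<not> (\<exists>y\<in>A. y \<noteq> x)"
  hence "A = {x}" by blast
  thus False using as(2) by simp
qed
lemma card2_I: "x \<in> A \<Longrightarrow> y \<in> A \<Longrightarrow> x \<noteq> y \<Longrightarrow> finite A \<Longrightarrow> 2 \<le> card A"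
proof -
  assume as: "x \<in> A" "y \<in> A" "x \<noteq> y" "finite A"
  have "card {x, y} \<le> card A" by (rule card_mono[OF as(4)]) (use as in auto)
  thus "2 \<le> card A" using as(3) by simp
qed

context slc
begin

lemma S_neq: "x \<in> S k \<Longrightarrow> y \<in> S l \<Longrightarrow> k \<noteq> l \<Longrightarrow> x \<noteq> y"
  unfolding S_def by auto

lemma iwalk2:
  assumes "E p x" "E x q" "x \<in> W"
  shows "iwalk E W p q (\<lambda>i. if i = 0 then p else if i = 1 then x else q) 2"
  using assms unfolding iwalk_def walk_def by (auto simp: less_2_cases_iff)

lemma nested:
  assumes "u \<in> S k" "v \<in> S k" "1 \<le> k" "k < D"
  shows "{w\<in>S (Suc k). E u w} \<subseteq> {w\<in>S (Suc k). E v w} \<or> {w\<in>S (Suc k). E v w} \<subseteq> {w\<in>S (Suc k). E u w}"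
proof (rule ccontr)
  assume "\<not> ?thesis"
  then obtain f1 f2 where f1: "f1 \<in> S (Suc k)" "E u f1" "\<not> E v f1" and f2: "f2 \<in> S (Suc k)" "E v f2" "\<not> E u f2"
    by blast
  have uv: "u \<noteq> v" using f1 f2 by auto
  have f12: "f1 \<noteq> f2" using f1 f2 by auto
  have kD: "Suc k < D"
  proof (rule ccontr)
    assume "\<not> Suc k < D"
    hence "Suc k = D" using S_le[OF f1(1)] by simp
    thus False using f1(1) f2(1) f12 SD by auto
  qed
  have e12: "E f1 f2" using S_clique[OF f1(1) f2(1) f12] kD by simp
  have w1: "iwalk E {f1} u f2 (\<lambda>i. if i = 0 then u else if i = 1 then f1 else f2) 2"
    by (rule iwalk2) (use f1 e12 in auto)
  have euv: "E u v" using S_clique[OF assms(1,2) uv assms(3,4)] .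
  have w2: "iwalk E {v} u f2 (\<lambda>i. if i = 0 then u else if i = 1 then v else f2) 2"
    by (rule iwalk2) (use euv f2 in auto)
  have sl: "u \<noteq> f1" "u \<noteq> f2" "v \<noteq> f1" "v \<noteq> f2"
    using S_neq[OF assms(1) f1(1)] S_neq[OF assms(1) f2(1)] S_neq[OF assms(2) f1(1)] S_neq[OF assms(2) f2(1)]
    by simp_all
  have h3: "u \<notin> {f1} \<union> {v}" using sl uv by simp
  have h4: "f2 \<notin> {f1} \<union> {v}" using sl f12 by simp
  have h6: "{f1} \<inter> {v} = {}" using sl by simp
  have h7: "\<forall>x\<in>{f1}. \<forall>y\<in>{v}. \<not> E x y" using f1(3) E_sym by blast
  have "E u f2" by (rule GL2[OF w1 w2 h3 h4 sl(2) h6 h7])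
  thus False using f2(3) by simp
qed

lemma hub:
  assumes "1 \<le> k" "k < D"
  shows "\<exists>h\<in>S k. \<forall>w\<in>S (Suc k). E h w"
proof -
  define F where "F u = {w\<in>S (Suc k). E u w}" for u
  obtain x0 where x0: "x0 \<in> S k" using S_ne[of k] assms by auto
  have bnd: "\<forall>y. y \<in> S k \<longrightarrow> card (F y) < Suc (card V)"
  proof (intro allI impI)
    fix y
    have "F y \<subseteq> V" unfolding F_def S_def by auto
    hence "card (F y) \<le> card V" using finV by (rule card_mono[rotated])
    thus "card (F y) < Suc (card V)" by simp
  qed
  obtain h where h: "h \<in> S k" "\<forall>y. y \<in> S k \<longrightarrow> card (F y) \<le> card (F h)"
    using ex_has_greatest_nat[of "\<lambda>x. x \<in> S k" x0 "\<lambda>y. card (F y)", OF x0 bnd] by blast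
  have "E h w" if w: "w \<in> S (Suc k)" for w
  proof -
    obtain b where b: "b \<in> S k" "E w b" using S_back[OF w] by auto
    have fin: "finite (F y)" for y unfolding F_def using S_fin by auto
    have "F b \<subseteq> F h"
    proof (cases "F b \<subseteq> F h")
      case True thus ?thesis .
    next
      case False
      hence "F h \<subseteq> F b" using nested[OF b(1) h(1) assms] unfolding F_def by blast
      moreover have "card (F b) \<le> card (F h)" using h(2) b(1) by blast
      moreover have "card (F h) \<le> card (F b)" using card_mono[OF fin \<open>F h \<subseteq> F b\<close>] .
      ultimately have "F h = F b" using card_subset_eq[OF fin \<open>F h \<subseteq> F b\<close>] by simp
      thus ?thesis by simp
    qed
    moreover have "w \<in> F b" using w b E_sym unfolding F_def by auto
    ultimately show ?thesis unfolding F_def by auto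
  qed
  thus ?thesis using h(1) by blast
qed

end



context slc
begin

lemma noE: "x \<in> S k \<Longrightarrow> y \<in> S l \<Longrightarrow> Suc k < l \<Longrightarrow> \<not> E x y \<and> \<not> E y x"
  using S_adj E_sym by fastforce

lemma final:
  assumes b: "b1 \<in> S 1" "b2 \<in> S 1" "b1 \<noteq> b2" and e: "e1 \<in> S (D - 1)" "e2 \<in> S (D - 1)" "e1 \<noteq> e2"
  shows "has_induced V E F1_V F1_E \<or> has_induced V E F2_V F2_E \<or> (\<exists>i\<ge>1. has_induced V E (H_V i) (H_E i))"
proof -
  define W where "W = {k. 2 \<le> k \<and> 2 \<le> card (S k)}"
  have DW: "D - 1 \<in> W" using card2_I[OF e S_fin] D3 unfolding W_def by auto
  define q where "q = (LEAST k. k \<in> W)"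
  have qW: "q \<in> W" unfolding q_def using DW by (rule LeastI)
  have qle: "q \<le> D - 1" unfolding q_def using DW by (rule Least_le)
  have below: "card (S k) \<le> 1" if "2 \<le> k" "k < q" for k
  proof (rule ccontr)
    assume "\<not> card (S k) \<le> 1"
    hence "k \<in> W" using that unfolding W_def by auto
    hence "q \<le> k" unfolding q_def by (rule Least_le)
    thus False using that by simp
  qed
  have q2: "2 \<le> q" "2 \<le> card (S q)" using qW unfolding W_def by auto
  have qD: "q < D" using qle D3 by simp
  have c1: "2 \<le> card (S 1)" using card2_I[OF b S_fin] .
  have a0: "a \<in> S 0" using S0 by simp
  have card0: "card (S 0) \<le> 1" using S0 by simp
  show ?thesis
  proof (cases "q = 2")
    case True
    obtain h where h: "h \<in> S 1" "\<forall>w\<in>S 2. E h w" using hub[of 1] D3 by (auto simp: numeral_2_eq_2)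
    obtain s where s: "s \<in> S 1" "s \<noteq> h" using card2_ex[OF S_fin c1 h(1)] by auto
    obtain r2 where r2: "r2 \<in> S 2" "E s r2" using S_fwd[OF s(1)] D3 by (auto simp: numeral_2_eq_2)
    obtain s' where s': "s' \<in> S 2" "s' \<noteq> r2" using card2_ex[OF S_fin _ r2(1)] q2(2) True by auto
    obtain r3 where r3: "r3 \<in> S 3" "E r2 r3" "E s' r3"
      using S_common[OF r2(1) s'(1) s'(2)[symmetric]] D3 by (auto simp: numeral_3_eq_3 numeral_2_eq_2)
    have E1: "E a s" "E a h" using S_single_back[OF a0 _ card0] s(1) h(1) by auto
    have E2: "E s h" using S_clique[OF s(1) h(1) s(2)] D3 by simp
    have E3: "E h r2" "E h s'" using h(2) r2(1) s'(1) by auto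
    have E4: "E r2 s'" using S_clique[OF r2(1) s'(1) s'(2)[symmetric]] D3 by simp
    note Es = E1 E2 E3 E4 r2(2) r3(2,3)
    have Es': "E s a" "E h a" "E h s" "E r2 h" "E s' h" "E s' r2" "E r2 s" "E r3 r2" "E r3 s'"
      using Es E_sym by blast+
    have N: "\<not> E a r2" "\<not> E r2 a" "\<not> E a s'" "\<not> E s' a" "\<not> E a r3" "\<not> E r3 a"
      "\<not> E s r3" "\<not> E r3 s" "\<not> E h r3" "\<not> E r3 h"
      using noE[OF a0 r2(1)] noE[OF a0 s'(1)] noE[OF a0 r3(1)] noE[OF s(1) r3(1)] noE[OF h(1) r3(1)]
      by auto
    have irr: "\<not> E x x" for x using E_irr .
    have dist: "a \<noteq> s" "a \<noteq> h" "a \<noteq> r2" "a \<noteq> s'" "a \<noteq> r3" "s \<noteq> r2" "s \<noteq> s'" "s \<noteq> r3"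
      "h \<noteq> r2" "h \<noteq> s'" "h \<noteq> r3" "r2 \<noteq> r3" "s' \<noteq> r3" "s \<noteq> h" "r2 \<noteq> s'"
      using S_neq[OF a0 s(1)] S_neq[OF a0 h(1)] S_neq[OF a0 r2(1)] S_neq[OF a0 s'(1)] S_neq[OF a0 r3(1)]
        S_neq[OF s(1) r2(1)] S_neq[OF s(1) s'(1)] S_neq[OF s(1) r3(1)]
        S_neq[OF h(1) r2(1)] S_neq[OF h(1) s'(1)] S_neq[OF h(1) r3(1)]
        S_neq[OF r2(1) r3(1)] S_neq[OF s'(1) r3(1)] s(2) s'(2) by auto
    have VV: "a \<in> V" "s \<in> V" "h \<in> V" "r2 \<in> V" "s' \<in> V" "r3 \<in> V"
      using a0 s(1) h(1) r2(1) s'(1) r3(1) S_V by auto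
    show ?thesis
    proof (cases "E s s'")
      case True
      have Ess: "E s s'" "E s' s" using True E_sym by auto
      define f where "f n = (if n = 0 then s else if n = 1 then h else if n = 2 then r2 else if n = 3 then s' else if n = 4 then a else r3)" for n :: nat
      have V6: "F2_V = {0,1,2,3,4,5}" unfolding F2_V_def by auto
      have "inj_on f F2_V" unfolding V6 inj_on_def f_def using dist by auto
      moreover have "f ` F2_V \<subseteq> V" unfolding V6 f_def using VV by auto
      moreover have "\<forall>u\<in>F2_V. \<forall>v\<in>F2_V. E (f u) (f v) \<longleftrightarrow> F2_E u v"
        unfolding V6 f_def F2_E_def F2_E0_def using Es Es' N irr Ess by simp
      ultimately show ?thesis unfolding has_induced_def by blast
    next
      case False
      have Ess: "\<not> E s s'" "\<not> E s' s" using False E_sym by auto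
      define f where "f n = (if n = 1 then a else if n = 2 then s else if n = 3 then h else if n = 4 then r2 else if n = 5 then s' else r3)" for n :: nat
      have V6: "F1_V = {1,2,3,4,5,6}" unfolding F1_V_def by auto
      have "inj_on f F1_V" unfolding V6 inj_on_def f_def using dist by auto
      moreover have "f ` F1_V \<subseteq> V" unfolding V6 f_def using VV by auto
      moreover have "\<forall>u\<in>F1_V. \<forall>v\<in>F1_V. E (f u) (f v) \<longleftrightarrow> F1_E u v"
        unfolding V6 f_def F1_E_def F1_V_def using Es Es' N irr Ess by simp
      ultimately show ?thesis unfolding has_induced_def by blast
    qed
  next
    case False
    hence q3: "3 \<le> q" using q2 by simp
    define i where "i = q - 2"
    have i1: "1 \<le> i" and qi: "q = i + 2" using q3 unfolding i_def by auto
    obtain z2 where z2: "z2 \<in> S q" using S_ne[of q] qD by auto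
    obtain z3 where z3: "z3 \<in> S q" "z3 \<noteq> z2" using card2_ex[OF S_fin q2(2) z2] by auto
    obtain z1 where z1: "z1 \<in> S (Suc q)" "E z3 z1" "E z2 z1"
      using S_common[OF z3(1) z2 z3(2)] q2 qD by auto
    define y where "y j = (SOME v. v \<in> S (Suc j))" for j
    have yS: "y j \<in> S (Suc j)" if "Suc j \<le> D" for j
      unfolding y_def using S_ne[OF that] by (simp add: some_in_eq)
    define f where "f u = (if u = 0 then a else if u = 1 then b1 else if u = 2 then b2 else if u = 3 then z1
       else if u = 4 then z2 else if u = 5 then z3 else y (u - 5))" for u
    have fS: "f u \<in> S (sig q u)" if u: "u \<in> H_V i" for u
    proof -
      have "u = 0 \<or> u = 1 \<or> u = 2 \<or> u = 3 \<or> u = 4 \<or> u = 5 \<or> 6 \<le> u" by (rule six)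
      moreover have "u \<le> 5 + i" using u unfolding H_V_def by simp
      moreover {
        assume "6 \<le> u" "u \<le> 5 + i"
        hence "Suc (u - 5) \<le> D" "sig q u = Suc (u - 5)" using qi qD unfolding sig_def by auto
        hence "f u \<in> S (sig q u)" using yS[of "u - 5"] \<open>6 \<le> u\<close> unfolding f_def by auto
      }
      ultimately show ?thesis using a0 b z1 z2 z3 unfolding f_def sig_def by auto
    qed
    have fV: "f u \<in> V" if "u \<in> H_V i" for u using fS[OF that] S_V by blast
    have same: "E (f u) (f v)" if uv: "u \<in> H_V i" "v \<in> H_V i" "u \<noteq> v" "sig q u = sig q v" for u v
    proof -
      have "(u = 1 \<and> v = 2) \<or> (u = 2 \<and> v = 1) \<or> (u = 4 \<and> v = 5) \<or> (u = 5 \<and> v = 4)"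
        using sig_eq[OF i1 uv(1,2)] uv(3,4) qi by simp
      moreover have "E b1 b2" using S_clique[OF b] D3 by simp
      moreover have "E z2 z3" using S_clique[OF z2 z3(1) z3(2)[symmetric]] q2 qD by simp
      moreover have "E b2 b1" "E z3 z2" using calculation(2,3) E_sym by blast+
      ultimately show ?thesis unfolding f_def by auto
    qed
    have up: "E (f u) (f v)" if uv: "u \<in> H_V i" "v \<in> H_V i" "sig q v = Suc (sig q u)" for u v
    proof (cases "sig q u = q")
      case True
      have "(u = 4 \<or> u = 5) \<and> v = 3" using sig_top[OF i1 uv(1,2)] uv(3) True qi by simp
      moreover have "E z1 z2" "E z1 z3" using z1 E_sym by blast+
      ultimately show ?thesis using z1 unfolding f_def by auto
    next
      case False
      have fu: "f u \<in> S (sig q u)" using fS uv(1) by blast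
      have fv: "f v \<in> S (Suc (sig q u))" using fS[OF uv(2)] uv(3) by simp
      have "sig q v \<le> Suc q" using uv(2) unfolding sig_def H_V_def qi by auto
      hence lt: "sig q u < q" using False uv(3) by simp
      show ?thesis
      proof (cases "sig q u = 1")
        case True
        have "card (S (Suc (sig q u))) \<le> 1" using below[of 2] True q3 by (simp add: numeral_2_eq_2)
        thus ?thesis using S_single_fwd[OF fu fv] by simp
      next
        case False
        have "card (S (sig q u)) \<le> 1"
        proof (cases "sig q u = 0")
          case True thus ?thesis using card0 by simp
        next
          case False
          thus ?thesis using below[of "sig q u"] \<open>sig q u \<noteq> 1\<close> lt by simp
        qed
        thus ?thesis using S_single_back[OF fu fv] by simp
      qed
    qed
    have adj: "E (f u) (f v) \<longleftrightarrow> (u \<noteq> v \<and> sig q u \<le> Suc (sig q v) \<and> sig q v \<le> Suc (sig q u))"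
      if uv: "u \<in> H_V i" "v \<in> H_V i" for u v
    proof
      assume e: "E (f u) (f v)"
      have "u \<noteq> v" using e E_irr by auto
      thus "u \<noteq> v \<and> sig q u \<le> Suc (sig q v) \<and> sig q v \<le> Suc (sig q u)"
        using S_adj[OF fS[OF uv(1)] fS[OF uv(2)] e] by simp
    next
      assume h: "u \<noteq> v \<and> sig q u \<le> Suc (sig q v) \<and> sig q v \<le> Suc (sig q u)"
      hence "sig q u = sig q v \<or> sig q v = Suc (sig q u) \<or> sig q u = Suc (sig q v)" by auto
      thus "E (f u) (f v)"
      proof (elim disjE)
        assume "sig q u = sig q v" thus ?thesis using same uv h by blast
      next
        assume "sig q v = Suc (sig q u)" thus ?thesis using up uv by blast
      next
        assume "sig q u = Suc (sig q v)" thus ?thesis using up[OF uv(2,1)] E_sym by blast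
      qed
    qed
    have inj: "inj_on f (H_V i)"
    proof (rule inj_onI, rule ccontr)
      fix u v assume uv: "u \<in> H_V i" "v \<in> H_V i" "f u = f v" "u \<noteq> v"
      have "sig q u = sig q v" using S_disj fS[OF uv(1)] fS[OF uv(2)] uv(3) by metis
      hence "E (f u) (f v)" using same uv by blast
      thus False using uv(3) E_irr by simp
    qed
    have "has_induced V E (H_V i) (H_E i)"
      unfolding has_induced_def
    proof (intro exI[of _ f] conjI)
      show "inj_on f (H_V i)" by (rule inj)
      show "f ` H_V i \<subseteq> V" using fV by blast
      show "\<forall>u\<in>H_V i. \<forall>v\<in>H_V i. E (f u) (f v) \<longleftrightarrow> H_E i u v"
        using adj H_sig[OF i1] qi by simp
    qed
    thus ?thesis using i1 by blast
  qed
qed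

end



context sg
begin

lemma dist1:
  assumes "u \<in> V" "v \<in> V" "d u v = Suc 0" shows "E u v"
proof -
  obtain w where w: "E u w" "d w v = 0" using dist_pred[OF assms] by blast
  have "w = v" using dist_0[OF _ assms(2) w(2)] E_V w(1) by blast
  thus ?thesis using w by simp
qed

lemma sep_min:
  assumes "E y c" "E y c'" "v \<in> V - {c,c'}" "y \<in> V - {c,c'}" "\<not> reach_in E (V - {c,c'}) v y"
  shows "d v y = Suc (min (d v c) (d v c'))"
proof -
  have cV: "c \<in> V" "c' \<in> V" "y \<in> V" "v \<in> V" using E_V assms by auto
  obtain s where s: "s \<in> {c,c'}" "d v y = d v s + d s y" using sep[OF assms(3,4,5)] by blast
  have "d s y = 1" using s(1) dist_edge E_sym assms(1,2) by auto
  hence eq: "d v y = Suc (d v s)" using s by simp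
  have "d v y \<le> d v c + d c y" using dist_tri[OF cV(4) cV(1) cV(3)] .
  moreover have "d c y = 1" using dist_edge E_sym assms(1) by auto
  moreover have "d v y \<le> d v c' + d c' y" using dist_tri[OF cV(4) cV(2) cV(3)] .
  moreover have "d c' y = 1" using dist_edge E_sym assms(2) by auto
  ultimately show ?thesis using eq s(1) by auto
qed

end

theorem mainTheorem7:
  fixes V :: "'a set" and E :: "'a \<Rightarrow> 'a \<Rightarrow> bool"
    and t1 t1' c1 c1' t2 t2' c2 c2' :: 'a
  assumes graph: "simple_graph V E"
    and conn: "connected_graph V E"
    and chord: "chordal V E"
    and D1: "induced_diamond V E t1 t1' c1 c1'"
    and D2: "induced_diamond V E t2 t2' c2 c2'"
    and i: "{c1, c1'} \<inter> {c2, c2'} = {}"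
    and ii: "(\<forall>u\<in>{c1, c1'}. \<forall>v\<in>{c2, c2'}. \<not> E u v) \<longrightarrow>
             (\<forall>S. minimal_separator V E {c1, c1'} {c2, c2'} S \<longrightarrow> card S = 1)"
    and iii1: "\<not> reach_in E (V - {c1, c1'}) t1 t1'"
    and iii2: "\<not> reach_in E (V - {c2, c2'}) t2 t2'"
    and iv1: "\<forall>x \<in> V - {c1, c1'}. \<exists>y. reach_in E (V - {c1, c1'}) x y \<and> E y c1 \<and> E y c1'"
    and iv2: "\<forall>x \<in> V - {c2, c2'}. \<exists>y. reach_in E (V - {c2, c2'}) x y \<and> E y c2 \<and> E y c2'"
  shows "has_induced V E F1_V F1_E \<or> has_induced V E F2_V F2_E \<or>
         (\<exists>i\<ge>1. has_induced V E (H_V i) (H_E i))"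
proof -
  interpret chg V E
    by (rule chg.intro[OF sg.intro[OF graph conn] chg_axioms.intro[OF chord]])
  have d1: "t1 \<in> V" "t1' \<in> V" "c1 \<in> V" "c1' \<in> V" "distinct [t1, t1', c1, c1']" "E c1 c1'"
    using D1 unfolding induced_diamond_def by auto
  have d2: "t2 \<in> V" "t2' \<in> V" "c2 \<in> V" "c2' \<in> V" "distinct [t2, t2', c2, c2']" "E c2 c2'"
    using D2 unfolding induced_diamond_def by auto
  have nc: "c1 \<notin> {c2,c2'}" "c1' \<notin> {c2,c2'}" using i by auto
  have c1S2: "c1 \<in> V - {c2,c2'}" "c1' \<in> V - {c2,c2'}" using d1 nc by auto
  have r11: "reach_in E (V - {c2,c2'}) c1' c1" using reach_edge[OF c1S2(2,1)] E_sym[OF d1(6)] by blast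
  obtain z0 where z0: "z0 \<in> V - {c2,c2'}" "\<not> reach_in E (V - {c2,c2'}) z0 c1"
  proof (cases "reach_in E (V - {c2,c2'}) t2 c1")
    case True
    have "\<not> reach_in E (V - {c2,c2'}) t2' c1"
    proof
      assume r: "reach_in E (V - {c2,c2'}) t2' c1"
      have "reach_in E (V - {c2,c2'}) t2 t2'" using reach_trans[OF True reach_sym[OF r]] .
      thus False using iii2 by simp
    qed
    moreover have "t2' \<in> V - {c2,c2'}" using d2 by auto
    ultimately show ?thesis using that by blast
  next
    case False
    moreover have "t2 \<in> V - {c2,c2'}" using d2 by auto
    ultimately show ?thesis using that by blast
  qed
  obtain z where z: "reach_in E (V - {c2,c2'}) z0 z" "E z c2" "E z c2'" using iv2 z0(1) by blast
  have znr: "\<not> reach_in E (V - {c2,c2'}) z c1"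
  proof
    assume "reach_in E (V - {c2,c2'}) z c1"
    thus False using z0(2) reach_trans[OF z(1)] by blast
  qed
  have zS2: "z \<in> V - {c2,c2'}" using z(1) unfolding reach_in_def by auto
  have zV: "z \<in> V" using zS2 by simp
  have zc1: "z \<noteq> c1" using znr reach_refl[OF c1S2(1)] by auto
  have zc1': "z \<noteq> c1'" using znr r11 by auto
  have zS1: "z \<in> V - {c1,c1'}" using zV zc1 zc1' by auto
  obtain k0 where k0: "k0 \<in> V - {c1,c1'}" "\<not> reach_in E (V - {c1,c1'}) z k0"
  proof (cases "reach_in E (V - {c1,c1'}) z t1")
    case True
    have "\<not> reach_in E (V - {c1,c1'}) z t1'"
    proof
      assume r: "reach_in E (V - {c1,c1'}) z t1'"
      have "reach_in E (V - {c1,c1'}) t1 t1'" using reach_trans[OF reach_sym[OF True] r] .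
      thus False using iii1 by simp
    qed
    moreover have "t1' \<in> V - {c1,c1'}" using d1 by auto
    ultimately show ?thesis using that by blast
  next
    case False
    moreover have "t1 \<in> V - {c1,c1'}" using d1 by auto
    ultimately show ?thesis using that by blast
  qed
  obtain x where x: "reach_in E (V - {c1,c1'}) k0 x" "E x c1" "E x c1'" using iv1 k0(1) by blast
  have xnr: "\<not> reach_in E (V - {c1,c1'}) z x"
  proof
    assume r: "reach_in E (V - {c1,c1'}) z x"
    have "reach_in E (V - {c1,c1'}) z k0" using reach_trans[OF r reach_sym[OF x(1)]] .
    thus False using k0 by simp
  qed
  have xS1: "x \<in> V - {c1,c1'}" using x(1) unfolding reach_in_def by auto
  have dzx: "d z x = Suc (min (d z c1) (d z c1'))" using sep_min[OF x(2,3) zS1 xS1 xnr] .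
  have dx: "d x z = Suc (min (d c1 z) (d c1' z))"
    using dzx dist_sym[OF zV] xS1 d1(3,4) by auto
  obtain w where w: "reach_in E (V - {c1,c1'}) z w" "E w c1" "E w c1'" using iv1 zS1 by blast
  obtain a b1 b2 where ab: "b1 \<noteq> b2" "E a b1" "E a b2" "Suc (d b1 z) = d a z" "Suc (d b2 z) = d a z"
     "d a z = Suc (min (d c1 z) (d c1' z))" "\<forall>v\<in>{a,b1,b2}. v = c1 \<or> v = c1' \<or> E v c1 \<or> E v c1'"
    using fat[OF d1(6) zV zc1 zc1' x(2,3) dx w] by blast
  have ne1: "\<not> E c1 z"
  proof
    assume "E c1 z"
    hence "reach_in E (V - {c2,c2'}) z c1" using reach_edge[OF zS2 c1S2(1)] E_sym by blast
    thus False using znr by simp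
  qed
  have ne1': "\<not> E c1' z"
  proof
    assume "E c1' z"
    hence "reach_in E (V - {c2,c2'}) z c1'" using reach_edge[OF zS2 c1S2(2)] E_sym by blast
    thus False using znr reach_trans[OF _ r11] by blast
  qed
  have dc1: "2 \<le> d c1 z"
  proof (rule ccontr)
    assume "\<not> 2 \<le> d c1 z"
    hence "d c1 z = 0 \<or> d c1 z = Suc 0" by auto
    thus False using dist_0[OF d1(3) zV] dist1[OF d1(3) zV] zc1 ne1 by auto
  qed
  have dc1': "2 \<le> d c1' z"
  proof (rule ccontr)
    assume "\<not> 2 \<le> d c1' z"
    hence "d c1' z = 0 \<or> d c1' z = Suc 0" by auto
    thus False using dist_0[OF d1(4) zV] dist1[OF d1(4) zV] zc1' ne1' by auto
  qed
  have da3: "3 \<le> d a z" using ab(6) dc1 dc1' by auto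
  have abV: "a \<in> V" "b1 \<in> V" "b2 \<in> V" using E_V ab(2,3) by auto
  have dc2z: "d c2 z = 1" "d c2' z = 1" using dist_edge E_sym z(2,3) by auto
  have comp: "v \<in> V - {c2,c2'} \<and> reach_in E (V - {c2,c2'}) v c1" if v: "v \<in> {a,b1,b2}" for v
  proof -
    have vV: "v \<in> V" using v abV by auto
    have "2 \<le> d v z" using v ab(4,5) da3 by auto
    hence vS: "v \<in> V - {c2,c2'}" using vV dc2z by auto
    have "v = c1 \<or> v = c1' \<or> E v c1 \<or> E v c1'" using ab(7) v by blast
    moreover {
      assume "E v c1'"
      hence "reach_in E (V - {c2,c2'}) v c1'" using reach_edge[OF vS c1S2(2)] by blast
      hence "reach_in E (V - {c2,c2'}) v c1" using reach_trans[OF _ r11] by blast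
    }
    ultimately have "reach_in E (V - {c2,c2'}) v c1"
      using reach_refl[OF c1S2(1)] r11 reach_edge[OF vS c1S2(1)] by blast
    thus ?thesis using vS by blast
  qed
  have mz: "d v z = Suc (min (d v c2) (d v c2'))" if v: "v \<in> {a,b1,b2}" for v
  proof -
    have c: "v \<in> V - {c2,c2'}" "reach_in E (V - {c2,c2'}) v c1" using comp[OF v] by auto
    have "\<not> reach_in E (V - {c2,c2'}) v z"
    proof
      assume "reach_in E (V - {c2,c2'}) v z"
      hence "reach_in E (V - {c2,c2'}) z c1" using reach_trans[OF reach_sym c(2)] by blast
      thus False using znr by simp
    qed
    thus ?thesis using sep_min[OF z(2,3) c(1) zS2] by blast
  qed
  have aS2: "a \<in> V - {c2,c2'}" using comp by blast
  obtain w2 where w2: "reach_in E (V - {c2,c2'}) a w2" "E w2 c2" "E w2 c2'" using iv2 aS2 by blast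
  have dza: "d z a = Suc (min (d c2 a) (d c2' a))"
    using mz[of a] dist_sym[OF zV abV(1)] dist_sym[OF abV(1) d2(3)] dist_sym[OF abV(1) d2(4)] by auto
  have ac2: "a \<noteq> c2" "a \<noteq> c2'" using aS2 by auto
  obtain t' e1 e2 where te: "e1 \<noteq> e2" "E t' e1" "E t' e2" "Suc (d e1 a) = d t' a" "Suc (d e2 a) = d t' a"
     "d t' a = Suc (min (d c2 a) (d c2' a))" "\<forall>cc\<in>{c2,c2'}. Suc (d cc a) = d t' a \<longrightarrow> E t' cc"
    using fat[OF d2(6) abV(1) ac2 z(2,3) dza w2] by blast
  define m where "m = min (d c2 a) (d c2' a)"
  have tV: "t' \<in> V" using E_V te(2) by auto
  define D where "D = d a t'"
  have Dm: "D = Suc m" unfolding D_def m_def using te(6) dist_sym[OF abV(1) tV] by simp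
  have maz: "d a z = Suc m" using mz[of a] dist_sym[OF abV(1) d2(3)] dist_sym[OF abV(1) d2(4)]
    unfolding m_def by auto
  have m2: "2 \<le> m" using maz da3 by simp
  interpret slc V E a t' D
    by (rule slc.intro[OF chg_axioms]) (use abV tV D_def Dm m2 in \<open>unfold_locales, auto\<close>)
  have bS: "b \<in> S 1" if b: "b \<in> {b1,b2}" for b
  proof -
    have bV: "b \<in> V" using b abV by auto
    have dba: "d b a = 1" using b ab(2,3) dist_edge E_sym by auto
    have "d b z = m" using b ab(4,5) maz by auto
    hence mb: "Suc (min (d b c2) (d b c2')) = m" using mz[of b] b by auto
    obtain cc where cc: "cc \<in> {c2,c2'}" "Suc (d b cc) = m" using mb by (cases "d b c2 \<le> d b c2'") auto
    have ccV: "cc \<in> V" using cc(1) d2 by auto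
    have "d cc a \<le> d cc b + d b a" using dist_tri[OF ccV bV abV(1)] .
    moreover have "d cc b = d b cc" using dist_sym[OF ccV bV] .
    moreover have "m \<le> d cc a" using cc(1) unfolding m_def by auto
    ultimately have "d cc a = m" using cc(2) dba by auto
    hence "E t' cc" using te(7) cc(1) Dm te(6) unfolding m_def by auto
    hence "d cc t' = 1" using dist_edge E_sym by auto
    moreover have "d b t' \<le> d b cc + d cc t'" using dist_tri[OF bV ccV tV] .
    ultimately have "d b t' \<le> D - 1" using cc(2) Dm by auto
    thus ?thesis using S_mem[OF bV dba] by simp
  qed
  have eS: "e \<in> S (D - 1)" if e: "e \<in> {e1,e2}" for e
  proof -
    have eV: "e \<in> V" using e te(2,3) E_V by auto
    have "d e t' = 1" using e te(2,3) dist_edge E_sym by auto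
    moreover have "d e a \<le> D - 1" using e te(4,5) Dm te(6) unfolding m_def by auto
    ultimately show ?thesis using S_mem2[OF eV, of "D - 1"] Dm by auto
  qed
  show ?thesis using final[OF bS bS ab(1) eS eS te(1)] by auto
qed


end
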